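(* Let $R$ be a ring. (1) If $R$ is $\Gamma$-graded and quasi-Baer, then $R$ is graded quasi-Baer. (2) If $R$ is $\Gamma$-graded, graded quasi-Baer, and the (left and right) annihilators of its two-sided ideals are graded ideals, then $R$ is quasi-Baer.
   Context: Rings are associative, not necessarily unital. $R$ is $\Gamma$-graded ($\Gamma$ a group) if $R=\bigoplus_{\gamma\in\Gamma}R_\gamma$ with $R_\gamma R_\delta\subseteq R_{\gamma\delta}$; homogeneous elements are those of $\bigcup_\gamma R_\gamma$; a (one- or two-sided) ideal $I$ is graded if $I=\bigoplus_\gamma(I\cap R_\gamma)$. $\operatorname{ann}_r(X)=\{r\mid Xr=0\}$, $\operatorname{ann}_l(X)=\{r\mid rX=0\}$. $R$ is quasi-Baer if for every right ideal $I$ there is an idempotent $\varepsilon\in R$ with $\operatorname{ann}_r(I)=\varepsilon R$ (this is left-right symmetric, and equivalent to requiring it for two-sided ideals $I$; it forces $R$ to be unital). $R$ is graded quasi-Baer if for every graded right ideal $I$ there is a homogeneous idempotent $\varepsilon\in R$ with $\operatorname{ann}_r(I)=\varepsilon R$ (likewise left-right symmetric and equivalent to the version with graded two-sided ideals). *)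

theory Defs
  imports Main
begin

text \<open>Rings: type class ring (associative, not necessarily unital).
  Grading group: type class group_add (not necessarily commutative),
  written additively.\<close>

definition graded_ring :: "('g::group_add \<Rightarrow> 'a::ring set) \<Rightarrow> bool" where
  "graded_ring Rg \<longleftrightarrow>
     (\<forall>g. 0 \<in> Rg g \<and> (\<forall>x\<in>Rg g. \<forall>y\<in>Rg g. x + y \<in> Rg g) \<and> (\<forall>x\<in>Rg g. - x \<in> Rg g)) \<and>
     (\<forall>g h. \<forall>x\<in>Rg g. \<forall>y\<in>Rg h. x * y \<in> Rg (g + h)) \<and>
     (\<forall>r. \<exists>!c. finite {g. c g \<noteq> 0} \<and> (\<forall>g. c g \<in> Rg g) \<and> r = (\<Sum>g\<in>{g. c g \<noteq> 0}. c g))"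

definition homogeneous :: "('g \<Rightarrow> 'a set) \<Rightarrow> 'a \<Rightarrow> bool" where
  "homogeneous Rg x \<longleftrightarrow> (\<exists>g. x \<in> Rg g)"

definition additive_subgroup :: "'a::ring set \<Rightarrow> bool" where
  "additive_subgroup I \<longleftrightarrow> 0 \<in> I \<and> (\<forall>x\<in>I. \<forall>y\<in>I. x + y \<in> I) \<and> (\<forall>x\<in>I. - x \<in> I)"

definition right_ideal :: "'a::ring set \<Rightarrow> bool" where
  "right_ideal I \<longleftrightarrow> additive_subgroup I \<and> (\<forall>x\<in>I. \<forall>r. x * r \<in> I)"

definition left_ideal :: "'a::ring set \<Rightarrow> bool" where
  "left_ideal I \<longleftrightarrow> additive_subgroup I \<and> (\<forall>x\<in>I. \<forall>r. r * x \<in> I)"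

definition two_sided_ideal :: "'a::ring set \<Rightarrow> bool" where
  "two_sided_ideal I \<longleftrightarrow> left_ideal I \<and> right_ideal I"

definition graded_set :: "('g::group_add \<Rightarrow> 'a::ring set) \<Rightarrow> 'a set \<Rightarrow> bool" where
  "graded_set Rg I \<longleftrightarrow>
     (\<forall>x\<in>I. \<exists>c. finite {g. c g \<noteq> 0} \<and> (\<forall>g. c g \<in> I \<inter> Rg g) \<and> x = (\<Sum>g\<in>{g. c g \<noteq> 0}. c g))"

definition ann_r :: "'a::ring set \<Rightarrow> 'a set" where
  "ann_r X = {r. \<forall>x\<in>X. x * r = 0}"

definition ann_l :: "'a::ring set \<Rightarrow> 'a set" where
  "ann_l X = {r. \<forall>x\<in>X. r * x = 0}"

definition quasi_Baer :: "'a::ring itself \<Rightarrow> bool" where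
  "quasi_Baer _ \<longleftrightarrow>
     (\<forall>I::'a set. right_ideal I \<longrightarrow> (\<exists>e. e * e = e \<and> ann_r I = range (\<lambda>r. e * r)))"

definition graded_quasi_Baer :: "('g::group_add \<Rightarrow> 'a::ring set) \<Rightarrow> bool" where
  "graded_quasi_Baer Rg \<longleftrightarrow>
     (\<forall>I. right_ideal I \<and> graded_set Rg I \<longrightarrow>
        (\<exists>e. homogeneous Rg e \<and> e * e = e \<and> ann_r I = range (\<lambda>r. e * r)))"

end

theory Submission
  imports Defs
begin

lemma gr_decomp:
  assumes "graded_ring Rg"
  shows "\<exists>c. finite {g. c g \<noteq> 0} \<and> (\<forall>g. c g \<in> Rg g) \<and> r = (\<Sum>g\<in>{g. c g \<noteq> 0}. c g)"
  using assms unfolding graded_ring_def by metis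

lemma gr_mult:
  assumes "graded_ring Rg" "x \<in> Rg g" "y \<in> Rg h"
  shows "x * y \<in> Rg (g + h)"
  using assms unfolding graded_ring_def by blast

lemma gr_zero:
  assumes "graded_ring Rg"
  shows "0 \<in> Rg g"
  using assms unfolding graded_ring_def by blast

lemma L_proj:
  fixes Rg :: "'g::group_add \<Rightarrow> 'a::ring set"
  assumes gr: "graded_ring Rg" and fin: "finite S"
    and c: "\<forall>g. c g \<in> Rg g" and cS: "\<forall>g. g \<notin> S \<longrightarrow> c g = 0"
    and d: "\<forall>g. d g \<in> Rg g" and dS: "\<forall>g. g \<notin> S \<longrightarrow> d g = 0"
    and eq: "sum c S = sum d S"
  shows "c = d"
proof -
  have sc: "sum c S = sum c {g. c g \<noteq> 0}"
    by (rule sum.mono_neutral_right) (use fin cS in auto)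
  have sd: "sum d S = sum d {g. d g \<noteq> 0}"
    by (rule sum.mono_neutral_right) (use fin dS in auto)
  have fc: "finite {g. c g \<noteq> 0}" by (rule finite_subset[OF _ fin]) (use cS in auto)
  have fd: "finite {g. d g \<noteq> 0}" by (rule finite_subset[OF _ fin]) (use dS in auto)
  have all: "\<forall>r. \<exists>!c. finite {g. c g \<noteq> 0} \<and> (\<forall>g. c g \<in> Rg g) \<and> r = (\<Sum>g\<in>{g. c g \<noteq> 0}. c g)"
    using gr unfolding graded_ring_def by (elim conjE) assumption
  note ex = spec[OF all, of "sum c S"]
  show ?thesis
    using ex fc fd c d sc sd eq by metis
qed

lemma R1:
  fixes Rg :: "'g::group_add \<Rightarrow> 'a::ring set"
  assumes gr: "graded_ring Rg" and fin: "finite S"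
    and c: "\<forall>g. c g \<in> Rg g" and cS: "\<forall>g. g \<notin> S \<longrightarrow> c g = 0"
    and x: "x \<in> Rg h" and y: "y \<in> Rg h"
    and eq: "(\<Sum>g\<in>S. c g * x) = y"
  shows "c 0 * x = y"
proof -
  define T where "T = (\<lambda>g. g + h) ` S \<union> {h}"
  define d where "d = (\<lambda>k. c (k - h) * x)"
  define e where "e = (\<lambda>k. if k = h then y else 0)"
  have finT: "finite T" using fin unfolding T_def by auto
  have dR: "\<forall>k. d k \<in> Rg k"
  proof
    fix k
    have "c (k - h) * x \<in> Rg (k - h + h)" using gr_mult[OF gr] c x by blast
    then show "d k \<in> Rg k" unfolding d_def by simp
  qed
  have dT: "\<forall>k. k \<notin> T \<longrightarrow> d k = 0"
  proof (intro allI impI)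
    fix k assume "k \<notin> T"
    then have "k - h \<notin> S" unfolding T_def by (metis UnI1 diff_add_cancel image_eqI)
    then show "d k = 0" using cS unfolding d_def by simp
  qed
  have eR: "\<forall>k. e k \<in> Rg k" using y gr_zero[OF gr] unfolding e_def by auto
  have eT: "\<forall>k. k \<notin> T \<longrightarrow> e k = 0" unfolding e_def T_def by auto
  have dh: "h \<notin> (\<lambda>g. g + h) ` S \<Longrightarrow> d h = 0"
  proof -
    assume "h \<notin> (\<lambda>g. g + h) ` S"
    then have "0 \<notin> S" by (metis add_0 image_eqI)
    then show "d h = 0" using cS unfolding d_def by simp
  qed
  have "sum d T = sum d ((\<lambda>g. g + h) ` S)"
    by (rule sum.mono_neutral_right) (use finT dT dh in \<open>auto simp: T_def\<close>)
  also have "\<dots> = (\<Sum>g\<in>S. d (g + h))"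
    by (rule sum.reindex_cong[where l="\<lambda>g. g + h"]) (auto simp: inj_on_def)
  also have "\<dots> = y" using eq unfolding d_def by simp
  also have "y = sum e T" unfolding e_def using finT by (simp add: T_def)
  finally have "d = e" using L_proj[OF gr finT dR dT eR eT] by blast
  then have "d h = e h" by simp
  then show ?thesis unfolding d_def e_def by simp
qed

lemma L1:
  fixes Rg :: "'g::group_add \<Rightarrow> 'a::ring set"
  assumes gr: "graded_ring Rg" and fin: "finite S"
    and c: "\<forall>g. c g \<in> Rg g" and cS: "\<forall>g. g \<notin> S \<longrightarrow> c g = 0"
    and x: "x \<in> Rg h"
    and eq: "(\<Sum>g\<in>S. x * c g) = 0"
  shows "x * c g0 = 0"
proof -
  define T where "T = (\<lambda>g. h + g) ` S"
  define d where "d = (\<lambda>k. x * c (- h + k))"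
  define e where "e = (\<lambda>k::'g. 0::'a)"
  have finT: "finite T" using fin unfolding T_def by auto
  have dR: "\<forall>k. d k \<in> Rg k"
  proof
    fix k
    have "x * c (- h + k) \<in> Rg (h + (- h + k))" using gr_mult[OF gr] c x by blast
    then show "d k \<in> Rg k" unfolding d_def by (simp add: add.assoc[symmetric])
  qed
  have dT: "\<forall>k. k \<notin> T \<longrightarrow> d k = 0"
  proof (intro allI impI)
    fix k assume "k \<notin> T"
    then have "- h + k \<notin> S" unfolding T_def
      by (metis add_minus_cancel image_eqI)
    then show "d k = 0" using cS unfolding d_def by simp
  qed
  have eR: "\<forall>k. e k \<in> Rg k" using gr_zero[OF gr] unfolding e_def by auto
  have eT: "\<forall>k. k \<notin> T \<longrightarrow> e k = 0" unfolding e_def by auto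
  have "sum d T = (\<Sum>g\<in>S. d (h + g))"
    unfolding T_def by (rule sum.reindex_cong[where l="\<lambda>g. h + g"]) (auto simp: inj_on_def)
  also have "\<dots> = 0" using eq unfolding d_def by simp
  also have "0 = sum e T" unfolding e_def by simp
  finally have "d = e" using L_proj[OF gr finT dR dT eR eT] by blast
  then have "d (h + g0) = e (h + g0)" by simp
  then show ?thesis unfolding d_def e_def by simp
qed

lemma ann_comp:
  fixes Rg :: "'g::group_add \<Rightarrow> 'a::ring set"
  assumes gr: "graded_ring Rg" and gI: "graded_set Rg I" and r: "r \<in> ann_r I"
    and fc: "finite {g. c g \<noteq> 0}" and c: "\<forall>g. c g \<in> Rg g"
    and rc: "r = (\<Sum>g\<in>{g. c g \<noteq> 0}. c g)"
  shows "c h \<in> ann_r I"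
  unfolding ann_r_def
proof (intro CollectI ballI)
  fix x assume xI: "x \<in> I"
  obtain d where fd: "finite {g. d g \<noteq> 0}" and d: "\<forall>g. d g \<in> I \<inter> Rg g"
    and xd: "x = (\<Sum>g\<in>{g. d g \<noteq> 0}. d g)"
    using gI xI unfolding graded_set_def by blast
  have "\<forall>k. d k * c h = 0"
  proof
    fix k
    have "d k * r = 0" using r d unfolding ann_r_def by blast
    then have "(\<Sum>g\<in>{g. c g \<noteq> 0}. d k * c g) = 0" using rc by (simp add: sum_distrib_left)
    then show "d k * c h = 0"
      using L1[OF gr fc c _ _, of "d k" k] d by auto
  qed
  then show "x * c h = 0" using xd by (simp add: sum_distrib_right)
qed

lemma part1:
  fixes Rg :: "'g::group_add \<Rightarrow> 'a::ring set"
  assumes gr: "graded_ring Rg" and qb: "quasi_Baer TYPE('a)"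
  shows "graded_quasi_Baer Rg"
  unfolding graded_quasi_Baer_def
proof (intro allI impI, elim conjE)
  fix I :: "'a set"
  assume rI: "right_ideal I" and gI: "graded_set Rg I"
  obtain e where ee: "e * e = e" and ann: "ann_r I = range (\<lambda>r. e * r)"
    using qb rI unfolding quasi_Baer_def by blast
  obtain c where fc: "finite {g. c g \<noteq> 0}" and c: "\<forall>g. c g \<in> Rg g"
    and ec: "e = (\<Sum>g\<in>{g. c g \<noteq> 0}. c g)"
    using gr_decomp[OF gr, of e] by blast
  have eI: "e \<in> ann_r I" using ann ee by (metis rangeI)
  have ch: "\<And>h. c h \<in> ann_r I" using ann_comp[OF gr gI eI fc c ec] by blast
  have ech: "\<And>h. e * c h = c h"
  proof -
    fix h
    obtain s where "c h = e * s" using ch[of h] ann by auto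
    then show "e * c h = c h" using ee by (simp add: mult.assoc[symmetric])
  qed
  have c0: "\<And>h. c 0 * c h = c h"
  proof -
    fix h
    have "(\<Sum>g\<in>{g. c g \<noteq> 0}. c g * c h) = c h"
      using ech[of h] ec by (simp add: sum_distrib_right)
    then show "c 0 * c h = c h" using R1[OF gr fc c _ _ _] c by auto
  qed
  have c0e: "c 0 * e = e" using c0 ec by (simp add: sum_distrib_left)
  obtain s where s: "c 0 = e * s" using ch[of 0] ann by auto
  show "\<exists>e. homogeneous Rg e \<and> e * e = e \<and> ann_r I = range (\<lambda>r. e * r)"
  proof (intro exI conjI)
    show "homogeneous Rg (c 0)" using c unfolding homogeneous_def by blast
    show "c 0 * c 0 = c 0" by (rule c0)
    show "ann_r I = range (\<lambda>r. c 0 * r)"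
      unfolding ann
    proof (intro equalityI subsetI)
      fix y assume "y \<in> range (\<lambda>r. e * r)"
      then obtain r where "y = e * r" by auto
      then have "y = c 0 * (e * r)" using c0e by (simp add: mult.assoc[symmetric])
      then show "y \<in> range (\<lambda>r. c 0 * r)" by blast
    next
      fix y assume "y \<in> range (\<lambda>r. c 0 * r)"
      then obtain r where "y = c 0 * r" by auto
      then have "y = e * (s * r)" using s by (simp add: mult.assoc)
      then show "y \<in> range (\<lambda>r. e * r)" by blast
    qed
  qed
qed

lemma ann_r_two_sided:
  fixes I :: "'a::ring set"
  assumes "right_ideal I"
  shows "two_sided_ideal (ann_r I)"
  using assms unfolding two_sided_ideal_def left_ideal_def right_ideal_def additive_subgroup_def ann_r_def
  by (auto simp: distrib_left mult.assoc[symmetric])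

lemma triple_ann:
  fixes X :: "'a::ring set"
  shows "ann_r (ann_l (ann_r X)) = ann_r X"
  unfolding ann_r_def ann_l_def by blast

lemma part2:
  fixes Rg :: "'g::group_add \<Rightarrow> 'a::ring set"
  assumes gq: "graded_quasi_Baer Rg"
    and hyp: "\<forall>I. two_sided_ideal I \<longrightarrow>
             two_sided_ideal (ann_l I) \<and> graded_set Rg (ann_l I) \<and>
             two_sided_ideal (ann_r I) \<and> graded_set Rg (ann_r I)"
  shows "quasi_Baer TYPE('a)"
  unfolding quasi_Baer_def
proof (intro allI impI)
  fix I :: "'a set" assume rI: "right_ideal I"
  have J: "two_sided_ideal (ann_r I)" by (rule ann_r_two_sided[OF rI])
  then have L: "two_sided_ideal (ann_l (ann_r I))" "graded_set Rg (ann_l (ann_r I))"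
    using hyp by blast+
  then have "right_ideal (ann_l (ann_r I))" unfolding two_sided_ideal_def by blast
  then obtain e where "e * e = e" "ann_r (ann_l (ann_r I)) = range (\<lambda>r. e * r)"
    using gq L(2) unfolding graded_quasi_Baer_def by blast
  then show "\<exists>e. e * e = e \<and> ann_r I = range (\<lambda>r. e * r)"
    using triple_ann[of I] by auto
qed

theorem proposition4p3:
  fixes Rg :: "'g::group_add \<Rightarrow> 'a::ring set"
  assumes "graded_ring Rg"
  shows "(quasi_Baer TYPE('a) \<longrightarrow> graded_quasi_Baer Rg)
    \<and> (graded_quasi_Baer Rg \<and>
        (\<forall>I. two_sided_ideal I \<longrightarrow>
             two_sided_ideal (ann_l I) \<and> graded_set Rg (ann_l I) \<and>
             two_sided_ideal (ann_r I) \<and> graded_set Rg (ann_r I))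
       \<longrightarrow> quasi_Baer TYPE('a))"
  using part1[OF assms] part2[of Rg] by blast

end
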